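(* Let $\nu,\alpha,\kappa,\ell_0>0$, let $\vec u_0\in L^2(\mathbb{R}^3)$ be divergence-free and $\vec f\in L^2(\mathbb{R}^3)\cap\dot H^{-1}(\mathbb{R}^3)$ divergence-free and time independent. Let $\vec u\in L^\infty(]0,+\infty[,L^2)\cap L^2_{loc}([0,+\infty[,\dot H^1)$ be a weak solution of $\partial_t\vec{u}=\nu\Delta\vec{u}-\mathbb{P}((\vec{u}\cdot\nabla)\vec{u})+\vec{f}-\alpha P_\kappa(\vec{u})$, $\operatorname{div}\vec u=0$, $\vec u(0)=\vec u_0$, satisfying for all $t\ge0$ the energy inequality $\|\vec{u}(t)\|_{L^2}^2+2\nu\int_0^t\|\vec{u}(s)\|_{\dot H^1}^2ds\le \|\vec{u}_0\|_{L^2}^2+2\int_0^t\langle \vec{f},\vec{u}(s)\rangle_{\dot H^{-1}\times\dot H^1}ds-2\alpha\int_0^t\|P_\kappa(\vec{u})(s)\|_{L^2}^2ds$. Then $\varepsilon\le F\,U$.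
   Context: $\mathbb P$ is the Leray projector; $P_\kappa$ is the Fourier multiplier $\widehat{P_\kappa \vec u}(\xi)=\mathds 1_{|\xi|<\kappa}\widehat{\vec u}(\xi)$. $\varepsilon=\nu\limsup_{T\to\infty}\frac1T\int_0^T\|\vec u(t)\|_{\dot H^1}^2\frac{dt}{\ell_0^3}$; $U=\big(\limsup_{T\to\infty}\frac1T\int_0^T\|\vec u(t)\|_{L^2}^2\frac{dt}{\ell_0^3}\big)^{1/2}$; $F=\|\vec f\|_{L^2}/\ell_0^{3/2}$. *)

theory Defs
  imports "HOL-Analysis.Analysis"
begin

definition pd :: "'a::real_normed_vector \<Rightarrow> ('a \<Rightarrow> 'b::real_normed_vector) \<Rightarrow> 'a \<Rightarrow> 'b" where
  "pd v g x = frechet_derivative g (at x) v"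

fun iter_pd :: "'a::real_normed_vector list \<Rightarrow> ('a \<Rightarrow> 'b::real_normed_vector) \<Rightarrow> 'a \<Rightarrow> 'b" where
  "iter_pd [] g = g"
| "iter_pd (v # vs) g = pd v (iter_pd vs g)"

definition C_inf :: "('a::real_normed_vector \<Rightarrow> 'b::real_normed_vector) \<Rightarrow> bool" where
  "C_inf g \<longleftrightarrow> (\<forall>vs x. iter_pd vs g differentiable (at x))"

definition compact_support :: "('a::real_normed_vector \<Rightarrow> 'b::real_normed_vector) \<Rightarrow> bool" where
  "compact_support g \<longleftrightarrow> compact (closure {x. g x \<noteq> 0})"

definition test_fun :: "(real^3 \<Rightarrow> real) \<Rightarrow> bool" where
  "test_fun \<phi> \<longleftrightarrow> C_inf \<phi> \<and> compact_support \<phi>"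

definition jac :: "(real^3 \<Rightarrow> real^3) \<Rightarrow> real^3 \<Rightarrow> real^3^3" where
  "jac v x = (\<chi> i j. pd (axis j 1) v x $ i)"

definition lap :: "(real^3 \<Rightarrow> real^3) \<Rightarrow> real^3 \<Rightarrow> real^3" where
  "lap v x = (\<Sum>j\<in>UNIV. pd (axis j 1) (pd (axis j 1) v) x)"

definition sqint :: "('a::euclidean_space \<Rightarrow> 'b::euclidean_space) \<Rightarrow> bool" where
  "sqint v \<longleftrightarrow> v \<in> borel_measurable lborel \<and> integrable lborel (\<lambda>x. (norm (v x))\<^sup>2)"

definition L2norm :: "('a::euclidean_space \<Rightarrow> 'b::euclidean_space) \<Rightarrow> real" where
  "L2norm v = sqrt (\<integral>x. (norm (v x))\<^sup>2 \<partial>lborel)"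

definition div_free :: "(real^3 \<Rightarrow> real^3) \<Rightarrow> bool" where
  "div_free v \<longleftrightarrow> (\<forall>\<phi>. test_fun \<phi> \<longrightarrow> (\<integral>x. pd (v x) \<phi> x \<partial>lborel) = 0)"

definition weak_grad :: "(real^3 \<Rightarrow> real^3) \<Rightarrow> (real^3 \<Rightarrow> real^3^3) \<Rightarrow> bool" where
  "weak_grad v G \<longleftrightarrow> (\<forall>\<phi>. test_fun \<phi> \<longrightarrow> (\<forall>i j.
      (\<integral>x. v x $ i * pd (axis j 1) \<phi> x \<partial>lborel) = - (\<integral>x. G x $ i $ j * \<phi> x \<partial>lborel)))"

definition in_H1dot :: "(real^3 \<Rightarrow> real^3) \<Rightarrow> bool" where
  "in_H1dot v \<longleftrightarrow> (\<exists>G. weak_grad v G \<and> sqint G)"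

definition H1dot_norm :: "(real^3 \<Rightarrow> real^3) \<Rightarrow> real" where
  "H1dot_norm v = (if in_H1dot v then L2norm (SOME G. weak_grad v G \<and> sqint G) else 0)"

text \<open>Dot H^{-1} as the dual of dot H^1: the pairing with test fields is bounded by the
  dot H^1 seminorm.\<close>
definition in_Hdot_minus1 :: "(real^3 \<Rightarrow> real^3) \<Rightarrow> bool" where
  "in_Hdot_minus1 f \<longleftrightarrow> (\<exists>C. \<forall>\<phi>. (\<forall>i. test_fun (\<lambda>x. \<phi> x $ i)) \<longrightarrow>
      \<bar>\<integral>x. f x \<bullet> \<phi> x \<partial>lborel\<bar> \<le> C * L2norm (jac \<phi>))"

text \<open>Duality pairing dot H^{-1} x dot H^1 (for f in L^2, it is the L^2 pairing).\<close>
definition pairing :: "(real^3 \<Rightarrow> real^3) \<Rightarrow> (real^3 \<Rightarrow> real^3) \<Rightarrow> real" where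
  "pairing f v = (\<integral>x. f x \<bullet> v x \<partial>lborel)"

text \<open>Fourier convention: hat u(xi) = int u(x) e^{-i x.xi} dx. Then
  P_kappa u = F^{-1}(1_{|xi|<kappa} hat u) = K_kappa * u with
  K_kappa(z) = (2 pi)^{-3} int_{|xi|<kappa} e^{i z.xi} dxi = (2 pi)^{-3} int_{|xi|<kappa} cos(z.xi) dxi.\<close>
definition Pkernel :: "real \<Rightarrow> real^3 \<Rightarrow> real" where
  "Pkernel \<kappa> z = (2 * pi) powi (-3) * (LINT \<xi>:ball 0 \<kappa>|lborel. cos (z \<bullet> \<xi>))"

definition Pk :: "real \<Rightarrow> (real^3 \<Rightarrow> real^3) \<Rightarrow> real^3 \<Rightarrow> real^3" where
  "Pk \<kappa> v x = (\<integral>y. Pkernel \<kappa> (x - y) *\<^sub>R v y \<partial>lborel)"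

definition st_test :: "(real \<Rightarrow> real^3 \<Rightarrow> real^3) \<Rightarrow> bool" where
  "st_test \<Phi> \<longleftrightarrow> C_inf (case_prod \<Phi>) \<and> compact_support (case_prod \<Phi>) \<and>
     (\<forall>t x. (\<Sum>i\<in>UNIV. jac (\<Phi> t) x $ i $ i) = 0)"

definition dt :: "(real \<Rightarrow> real^3 \<Rightarrow> real^3) \<Rightarrow> real \<Rightarrow> real^3 \<Rightarrow> real^3" where
  "dt \<Phi> t x = frechet_derivative (\<lambda>s. \<Phi> s x) (at t) 1"

text \<open>Weak (Leray) formulation of
  d_t u = nu Lap u - P((u.grad)u) + f - alpha P_kappa u, div u = 0, u(0) = u0,
  tested against divergence-free test fields (the pressure/Leray projector drops out).\<close>
definition weak_solution ::
  "real \<Rightarrow> real \<Rightarrow> real \<Rightarrow> (real^3 \<Rightarrow> real^3) \<Rightarrow> (real^3 \<Rightarrow> real^3) \<Rightarrow> (real \<Rightarrow> real^3 \<Rightarrow> real^3) \<Rightarrow> bool" where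
  "weak_solution \<nu> \<alpha> \<kappa> f u0 u \<longleftrightarrow>
     (AE t in lborel. t > 0 \<longrightarrow> div_free (u t)) \<and> u 0 = u0 \<and>
     (\<forall>\<Phi>. st_test \<Phi> \<longrightarrow>
        (LINT t:{0..}|lborel. (\<integral>x.
            u t x \<bullet> dt \<Phi> t x + \<nu> * (u t x \<bullet> lap (\<Phi> t) x)
          + (\<Sum>i\<in>UNIV. \<Sum>j\<in>UNIV. u t x $ i * u t x $ j * jac (\<Phi> t) x $ i $ j)
          + f x \<bullet> \<Phi> t x - \<alpha> * (Pk \<kappa> (u t) x \<bullet> \<Phi> t x) \<partial>lborel))
        + (\<integral>x. u0 x \<bullet> \<Phi> 0 x \<partial>lborel) = 0)"

end

theory Submission
  imports Defs
begin
lemma amgm_aux: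
  fixes a b l :: real assumes "l > 0"
  shows "\<bar>a * b\<bar> \<le> (l * a\<^sup>2 + b\<^sup>2 / l) / 2"
proof -
  have "0 \<le> (l * \<bar>a\<bar> - \<bar>b\<bar>)\<^sup>2" by simp
  hence "2 * l * \<bar>a * b\<bar> \<le> l\<^sup>2 * a\<^sup>2 + b\<^sup>2"
    by (simp add: power2_eq_square abs_mult algebra_simps)
  hence "2 * l * \<bar>a * b\<bar> / l \<le> (l\<^sup>2 * a\<^sup>2 + b\<^sup>2) / l"
    using assms by (intro divide_right_mono) auto
  thus ?thesis using assms by (simp add: field_simps power2_eq_square)
qed

lemma CS_real:
  fixes F G :: "'a \<Rightarrow> real"
  assumes [measurable]: "F \<in> borel_measurable M" "G \<in> borel_measurable M"
    and iF: "integrable M (\<lambda>x. (F x)\<^sup>2)" and iG: "integrable M (\<lambda>x. (G x)\<^sup>2)"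
  shows "integrable M (\<lambda>x. \<bar>F x * G x\<bar>)"
    and "(\<integral>x. \<bar>F x * G x\<bar> \<partial>M) \<le> sqrt (\<integral>x. (F x)\<^sup>2 \<partial>M) * sqrt (\<integral>x. (G x)\<^sup>2 \<partial>M)"
proof -
  define A where "A = (\<integral>x. (F x)\<^sup>2 \<partial>M)"
  define B where "B = (\<integral>x. (G x)\<^sup>2 \<partial>M)"
  define I where "I = (\<integral>x. \<bar>F x * G x\<bar> \<partial>M)"
  have A0: "A \<ge> 0" "B \<ge> 0" unfolding A_def B_def by auto
  show int: "integrable M (\<lambda>x. \<bar>F x * G x\<bar>)"
  proof (rule Bochner_Integration.integrable_bound[where f="\<lambda>x. ((F x)\<^sup>2 + (G x)\<^sup>2) / 2"])
    show "integrable M (\<lambda>x. ((F x)\<^sup>2 + (G x)\<^sup>2) / 2)" using iF iG by auto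
    show "(\<lambda>x. \<bar>F x * G x\<bar>) \<in> borel_measurable M" by measurable
    show "AE x in M. norm \<bar>F x * G x\<bar> \<le> norm (((F x)\<^sup>2 + (G x)\<^sup>2) / 2)"
      using amgm_aux[of 1] by auto
  qed
  have key: "I \<le> (l * A + B / l) / 2" if "l > 0" for l
  proof -
    have "I \<le> (\<integral>x. (l * (F x)\<^sup>2 + (G x)\<^sup>2 / l) / 2 \<partial>M)"
      unfolding I_def using amgm_aux[OF that] int iF iG
      by (intro integral_mono) auto
    also have "\<dots> = (l * A + B / l) / 2"
      unfolding A_def B_def using iF iG by (simp add: integral_divide_zero)
    finally show ?thesis .
  qed
  have I0: "I \<ge> 0" unfolding I_def by auto
  have "I \<le> sqrt A * sqrt B"
  proof (cases "A > 0 \<and> B > 0")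
    case True
    have "I \<le> ((sqrt B / sqrt A) * A + B / (sqrt B / sqrt A)) / 2"
      using True by (intro key) auto
    also have "\<dots> = sqrt A * sqrt B"
      using True A0 by (simp add: field_simps)
    finally show ?thesis .
  next
    case False
    hence z: "A = 0 \<or> B = 0" using A0 by auto
    show ?thesis
    proof (rule ccontr)
      assume "\<not> ?thesis"
      hence Ip: "I > 0" using z by auto
      show False
      proof (cases "A = 0")
        case True
        have "I \<le> (((B + 1) / I) * A + B / ((B + 1) / I)) / 2"
          using Ip A0 by (intro key) auto
        also have "\<dots> = B * I / (2 * (B + 1))" using True Ip A0 by (simp add: field_simps)
        also have "\<dots> < I" using Ip A0 by (simp add: field_simps) (smt (verit) mult_nonneg_nonneg)
        finally show False by simp
      next
        case False
        hence B: "B = 0" using z by auto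
        have "I \<le> ((I / (A + 1)) * A + B / (I / (A + 1))) / 2"
          using Ip A0 by (intro key) auto
        also have "\<dots> = I * A / (2 * (A + 1))" using B Ip A0 by (simp add: field_simps)
        also have "\<dots> < I" using Ip A0 by (simp add: field_simps) (smt (verit) mult_nonneg_nonneg)
        finally show False by simp
      qed
    qed
  qed
  thus "(\<integral>x. \<bar>F x * G x\<bar> \<partial>M) \<le> sqrt (\<integral>x. (F x)\<^sup>2 \<partial>M) * sqrt (\<integral>x. (G x)\<^sup>2 \<partial>M)"
    unfolding I_def A_def B_def .
qed


lemma step_meas:
  fixes u :: "real \<Rightarrow> real^3 \<Rightarrow> real^3" and f :: "real^3 \<Rightarrow> real^3"
  assumes u_meas: "case_prod u \<in> borel_measurable borel"
    and fm: "f \<in> borel_measurable lborel"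
  shows "(\<lambda>s. L2norm (u s)) \<in> borel_measurable lborel"
    and "(\<lambda>s. pairing f (u s)) \<in> borel_measurable lborel"
proof -
  have um[measurable]: "(\<lambda>(s,x). u s x) \<in> borel_measurable (lborel \<Otimes>\<^sub>M lborel)"
    using u_meas by (simp add: lborel_prod)
  have [measurable]: "f \<in> borel_measurable borel" using fm by simp
  show "(\<lambda>s. L2norm (u s)) \<in> borel_measurable lborel"
    unfolding L2norm_def by measurable
  show "(\<lambda>s. pairing f (u s)) \<in> borel_measurable lborel"
    unfolding pairing_def by measurable
qed

lemma step_pair:
  fixes v f :: "real^3 \<Rightarrow> real^3"
  assumes "sqint f" "sqint v"
  shows "\<bar>pairing f v\<bar> \<le> L2norm f * L2norm v"
proof -
  have [measurable]: "f \<in> borel_measurable lborel" "v \<in> borel_measurable lborel"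
    and i: "integrable lborel (\<lambda>x. (norm (f x))\<^sup>2)" "integrable lborel (\<lambda>x. (norm (v x))\<^sup>2)"
    using assms by (auto simp: sqint_def)
  note cs = CS_real[of "\<lambda>x. norm (f x)" lborel "\<lambda>x. norm (v x)", OF _ _ i]
  have "\<bar>pairing f v\<bar> \<le> (\<integral>x. \<bar>f x \<bullet> v x\<bar> \<partial>lborel)"
    unfolding pairing_def using integral_norm_bound[of lborel "\<lambda>x. f x \<bullet> v x"] by simp
  also have "\<dots> \<le> (\<integral>x. \<bar>norm (f x) * norm (v x)\<bar> \<partial>lborel)"
    using cs(1) by (intro integral_mono') (auto simp: Cauchy_Schwarz_ineq2)
  also have "\<dots> \<le> L2norm f * L2norm v"
    using cs(2) by (simp add: L2norm_def)
  finally show ?thesis .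
qed

lemma step_time:
  fixes N p :: "real \<Rightarrow> real" and T M Lf :: real
  assumes Nm[measurable]: "N \<in> borel_measurable lborel"
    and N0: "\<And>s. N s \<ge> 0"
    and NM: "AE t in lborel. t > 0 \<longrightarrow> N t \<le> M"
    and pN: "\<And>s. s \<ge> 0 \<Longrightarrow> \<bar>p s\<bar> \<le> Lf * N s"
    and Lf: "Lf \<ge> 0" and T: "T \<ge> 0"
  shows "set_integrable lborel {0..T} (\<lambda>s. (N s)\<^sup>2)"
    and "(LINT s:{0..T}|lborel. (N s)\<^sup>2) \<le> M\<^sup>2 * T"
    and "(LINT s:{0..T}|lborel. p s) \<le> Lf * sqrt T * sqrt (LINT s:{0..T}|lborel. (N s)\<^sup>2)"
proof -
  have AEb: "AE s in lborel. indicator {0..T} s * (N s)\<^sup>2 \<le> indicator {0..T} s * M\<^sup>2"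
    using NM AE_lborel_singleton[of 0]
  proof eventually_elim
    case (elim s)
    show ?case
    proof (cases "s \<in> {0..T}")
      case True
      hence "N s \<le> M" using elim by auto
      hence "(N s)\<^sup>2 \<le> M\<^sup>2" using N0[of s] by (intro power_mono) auto
      thus ?thesis using True by simp
    qed simp
  qed
  have emT: "emeasure lborel {0..T} < top" using T by (simp add: emeasure_lborel_Icc)
  have iM: "integrable lborel (\<lambda>s. indicator {0..T} s * M\<^sup>2 :: real)"
    by (intro integrable_mult_left integrable_real_indicator) (use emT in auto)
  have iN2: "integrable lborel (\<lambda>s. indicator {0..T} s * (N s)\<^sup>2)"
    by (rule Bochner_Integration.integrable_bound[OF iM]) (use AEb N0 in \<open>auto elim!: eventually_mono\<close>)
  show si: "set_integrable lborel {0..T} (\<lambda>s. (N s)\<^sup>2)"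
    using iN2 by (simp add: set_integrable_def)
  have "(LINT s:{0..T}|lborel. (N s)\<^sup>2) = (\<integral>s. indicator {0..T} s * (N s)\<^sup>2 \<partial>lborel)"
    by (simp add: set_lebesgue_integral_def)
  also have "\<dots> \<le> (\<integral>s. indicator {0..T} s * M\<^sup>2 \<partial>lborel)"
    by (rule integral_mono_AE[OF iN2 iM AEb])
  also have "\<dots> = M\<^sup>2 * T" using T by simp
  finally show "(LINT s:{0..T}|lborel. (N s)\<^sup>2) \<le> M\<^sup>2 * T" .
  define F where "F = (\<lambda>s. indicator {0..T} s :: real)"
  define G where "G = (\<lambda>s. indicator {0..T} s * N s)"
  have [measurable]: "F \<in> borel_measurable lborel" "G \<in> borel_measurable lborel"
    unfolding F_def G_def by auto
  have F2: "(\<lambda>s. (F s)\<^sup>2) = F" unfolding F_def by (auto simp: indicator_def fun_eq_iff)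
  have G2: "(\<lambda>s. (G s)\<^sup>2) = (\<lambda>s. indicator {0..T} s * (N s)\<^sup>2)"
    unfolding G_def by (auto simp: indicator_def fun_eq_iff)
  have iF: "integrable lborel (\<lambda>s. (F s)\<^sup>2)" by (subst F2) (simp add: F_def emT)
  have iG: "integrable lborel (\<lambda>s. (G s)\<^sup>2)" unfolding G2 by (rule iN2)
  note cs = CS_real[of F lborel G, OF _ _ iF iG]
  have FG: "(\<lambda>s. \<bar>F s * G s\<bar>) = G" unfolding F_def G_def using N0
    by (auto simp: indicator_def fun_eq_iff)
  have "(LINT s:{0..T}|lborel. p s) = (\<integral>s. indicator {0..T} s * p s \<partial>lborel)"
    by (simp add: set_lebesgue_integral_def)
  also have "\<dots> \<le> (\<integral>s. Lf * G s \<partial>lborel)"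
  proof (rule integral_mono')
    show "integrable lborel (\<lambda>s. Lf * G s)" using cs(1) unfolding FG by auto
    fix s
    show "0 \<le> Lf * G s" unfolding G_def using N0 Lf by auto
    show "indicator {0..T} s * p s \<le> Lf * G s"
      unfolding G_def using pN[of s] by (auto simp: indicator_def)
  qed
  also have "\<dots> = Lf * (\<integral>s. \<bar>F s * G s\<bar> \<partial>lborel)" unfolding FG by simp
  also have "\<dots> \<le> Lf * (sqrt (\<integral>s. (F s)\<^sup>2 \<partial>lborel) * sqrt (\<integral>s. (G s)\<^sup>2 \<partial>lborel))"
    using cs(2) Lf by (intro mult_left_mono) auto
  also have "\<dots> = Lf * sqrt T * sqrt (LINT s:{0..T}|lborel. (N s)\<^sup>2)"
    unfolding F2 G2 using T by (simp add: F_def set_lebesgue_integral_def)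
  finally show "(LINT s:{0..T}|lborel. p s) \<le> Lf * sqrt T * sqrt (LINT s:{0..T}|lborel. (N s)\<^sup>2)" .
qed

theorem mainTheorem7:
  fixes \<nu> \<alpha> \<kappa> l\<^sub>0 :: real
    and u0 f :: "real^3 \<Rightarrow> real^3"
    and u :: "real \<Rightarrow> real^3 \<Rightarrow> real^3"
  assumes pos: "\<nu> > 0" "\<alpha> > 0" "\<kappa> > 0" "l\<^sub>0 > 0"
    and u0: "sqint u0" "div_free u0"
    and f: "sqint f" "in_Hdot_minus1 f" "div_free f"
    and u_meas: "case_prod u \<in> borel_measurable borel"
    and u_L2: "\<forall>t\<ge>0. sqint (u t)"
    and u_Linf: "\<exists>M. AE t in lborel. t > 0 \<longrightarrow> L2norm (u t) \<le> M"
    and u_H1: "AE t in lborel. t \<ge> 0 \<longrightarrow> in_H1dot (u t)"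
    and u_L2H1: "\<forall>T>0. set_integrable lborel {0..T} (\<lambda>t. (H1dot_norm (u t))\<^sup>2)"
    and sol: "weak_solution \<nu> \<alpha> \<kappa> f u0 u"
    and energy: "\<forall>t\<ge>0. (L2norm (u t))\<^sup>2 + 2 * \<nu> * (LINT s:{0..t}|lborel. (H1dot_norm (u s))\<^sup>2)
        \<le> (L2norm u0)\<^sup>2 + 2 * (LINT s:{0..t}|lborel. pairing f (u s))
           - 2 * \<alpha> * (LINT s:{0..t}|lborel. (L2norm (Pk \<kappa> (u s)))\<^sup>2)"
  shows "ereal \<nu> * Limsup at_top (\<lambda>T. ereal ((1 / T) * (LINT s:{0..T}|lborel. (H1dot_norm (u s))\<^sup>2) / l\<^sub>0 ^ 3))
     \<le> ereal (L2norm f / l\<^sub>0 powr (3/2)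
          * sqrt (real_of_ereal (Limsup at_top (\<lambda>T. ereal ((1 / T) * (LINT s:{0..T}|lborel. (L2norm (u s))\<^sup>2) / l\<^sub>0 ^ 3)))))"
proof -
  define N where "N s = L2norm (u s)" for s
  define Lf where "Lf = L2norm f"
  define s3 where "s3 = l\<^sub>0 powr (3/2)"
  define K where "K = Lf / s3"
  define C0 where "C0 = (L2norm u0)\<^sup>2 / 2 / l\<^sub>0 ^ 3"
  define H where "H T = (LINT s:{0..T}|lborel. (H1dot_norm (u s))\<^sup>2)" for T
  define E where "E T = (LINT s:{0..T}|lborel. (L2norm (u s))\<^sup>2)" for T
  define Pf where "Pf T = (LINT s:{0..T}|lborel. pairing f (u s))" for T
  define a where "a T = (1 / T) * H T / l\<^sub>0 ^ 3" for T
  define b where "b T = (1 / T) * E T / l\<^sub>0 ^ 3" for T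
  have fm: "f \<in> borel_measurable lborel" using f(1) by (simp add: sqint_def)
  note ms = step_meas[OF u_meas fm]
  obtain M where M: "AE t in lborel. t > 0 \<longrightarrow> N t \<le> M" using u_Linf unfolding N_def by blast
  have N0: "N s \<ge> 0" for s unfolding N_def L2norm_def by (auto intro!: integral_nonneg_AE)
  have Lf0: "Lf \<ge> 0" unfolding Lf_def L2norm_def by (auto intro!: integral_nonneg_AE)
  have pN: "\<bar>pairing f (u s)\<bar> \<le> Lf * N s" if "s \<ge> 0" for s
    unfolding Lf_def N_def using step_pair[OF f(1)] u_L2 that by auto
  have s3: "s3 > 0" "s3 * s3 = l\<^sub>0 ^ 3" "sqrt (l\<^sub>0 ^ 3) = s3"
  proof -
    show "s3 > 0" using pos(4) by (simp add: s3_def)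
    have "s3 * s3 = l\<^sub>0 powr 3" unfolding s3_def using pos(4) by (simp add: powr_add[symmetric])
    also have "\<dots> = l\<^sub>0 ^ 3" using pos(4) by (simp add: powr_realpow)
    finally show "s3 * s3 = l\<^sub>0 ^ 3" .
    hence "sqrt (l\<^sub>0 ^ 3) = sqrt (s3\<^sup>2)" by (simp add: power2_eq_square)
    thus "sqrt (l\<^sub>0 ^ 3) = s3" using \<open>s3 > 0\<close> by simp
  qed
  have K0: "K \<ge> 0" unfolding K_def using Lf0 s3 by auto
  have C00: "C0 \<ge> 0" unfolding C0_def using pos(4) by auto
  have key: "\<nu> * a T \<le> C0 / T + K * sqrt (b T) \<and> 0 \<le> b T \<and> b T \<le> M\<^sup>2 / l\<^sub>0 ^ 3" if T: "T > 0" for T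
  proof -
    note st = step_time[of N M "\<lambda>s. pairing f (u s)" Lf T, OF ms(1)[folded N_def] N0 M pN Lf0]
    have E: "E T \<le> M\<^sup>2 * T" "Pf T \<le> Lf * sqrt T * sqrt (E T)"
      using st T unfolding E_def Pf_def N_def by auto
    have E0: "E T \<ge> 0" unfolding E_def set_lebesgue_integral_def by (auto intro!: integral_nonneg_AE)
    have P0: "(LINT s:{0..T}|lborel. (L2norm (Pk \<kappa> (u s)))\<^sup>2) \<ge> 0"
      unfolding set_lebesgue_integral_def by (auto intro!: integral_nonneg_AE)
    have en: "(L2norm (u T))\<^sup>2 + 2 * \<nu> * H T \<le> (L2norm u0)\<^sup>2 + 2 * Pf T
           - 2 * \<alpha> * (LINT s:{0..T}|lborel. (L2norm (Pk \<kappa> (u s)))\<^sup>2)"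
      using energy T unfolding H_def Pf_def by auto
    have "\<alpha> * (LINT s:{0..T}|lborel. (L2norm (Pk \<kappa> (u s)))\<^sup>2) \<ge> 0"
      using P0 pos(2) by simp
    moreover have "(L2norm (u T))\<^sup>2 \<ge> 0" by simp
    ultimately have "\<nu> * H T \<le> (L2norm u0)\<^sup>2 / 2 + Pf T"
      using en by linarith
    hence HH: "\<nu> * H T \<le> (L2norm u0)\<^sup>2 / 2 + Lf * sqrt T * sqrt (E T)" using E by linarith
    have l3: "l\<^sub>0 ^ 3 > 0" using pos(4) by simp
    have "\<nu> * a T = (\<nu> * H T) / (T * l\<^sub>0 ^ 3)" unfolding a_def by (simp add: field_simps)
    also have "\<dots> \<le> ((L2norm u0)\<^sup>2 / 2 + Lf * sqrt T * sqrt (E T)) / (T * l\<^sub>0 ^ 3)"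
      using HH T l3 by (intro divide_right_mono) auto
    also have "\<dots> = C0 / T + K * sqrt (b T)"
    proof -
      have sb: "sqrt (b T) = sqrt (E T) / (sqrt T * s3)"
        unfolding b_def using s3 by (simp add: real_sqrt_divide real_sqrt_mult)
      have sT: "sqrt T * sqrt T = T" using T by simp
      have den: "T * l\<^sub>0 ^ 3 = (sqrt T * sqrt T) * (s3 * s3)" using sT s3 by simp
      have sTp: "sqrt T > 0" using T by simp
      show ?thesis unfolding sb C0_def K_def den using sTp s3(1) s3(2)[symmetric]
        by (simp add: field_simps)
    qed
    finally have 1: "\<nu> * a T \<le> C0 / T + K * sqrt (b T)" .
    have 2: "0 \<le> b T" unfolding b_def using E0 T l3 by auto
    have "b T \<le> (1 / T) * (M\<^sup>2 * T) / l\<^sub>0 ^ 3" unfolding b_def using E T l3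
      by (intro divide_right_mono mult_left_mono) auto
    hence 3: "b T \<le> M\<^sup>2 / l\<^sub>0 ^ 3" using T by simp
    show ?thesis using 1 2 3 by blast
  qed
  define L where "L = Limsup at_top (\<lambda>T. ereal (b T))"
  have Lub: "L \<le> ereal (M\<^sup>2 / l\<^sub>0 ^ 3)" unfolding L_def
    by (rule Limsup_bounded) (rule eventually_mono[OF eventually_gt_at_top[of "0::real"]], use key in auto)
  have Llb: "0 \<le> L" unfolding L_def
    by (rule le_Limsup, simp, rule eventually_mono[OF eventually_gt_at_top[of "0::real"]], use key in auto)
  obtain r where r: "L = ereal r" "r \<ge> 0" using Lub Llb by (cases L) auto
  have goal': "ereal \<nu> * Limsup at_top (\<lambda>T. ereal (a T)) \<le> ereal (K * sqrt (real_of_ereal L))"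
  proof (rule ereal_le_epsilon2)
    fix e :: real assume e: "e > 0"
    define d where "d = (e / (2 * (K + 1)))\<^sup>2"
    have d: "d > 0" "sqrt d = e / (2 * (K + 1))" unfolding d_def using e K0 by auto
    have ev1: "eventually (\<lambda>T. ereal (b T) < ereal (r + d)) at_top"
      by (rule Limsup_lessD) (use r d in \<open>simp add: L_def[symmetric]\<close>)
    have ev2: "eventually (\<lambda>T. T > 2 * C0 / e + 1) at_top" by (rule eventually_gt_at_top)
    have ev: "eventually (\<lambda>T. ereal (a T) \<le> ereal ((K * sqrt r + e) / \<nu>)) at_top"
      using ev1 ev2
    proof eventually_elim
      case (elim T)
      have C0e: "2 * C0 / e \<ge> 0" using C00 e by auto
      hence T: "T > 0" using elim by linarith
      have "2 * C0 / e < T" using elim by linarith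
      hence "2 * C0 < T * e" using e by (simp add: divide_less_eq)
      hence c: "C0 / T < e / 2" using T by (simp add: divide_less_eq mult.commute)
      have bb: "b T < r + d" using elim by simp
      have "sqrt (b T) \<le> sqrt (r + d)" using bb by simp
      also have "\<dots> \<le> sqrt r + sqrt d" using r d by (intro sqrt_add_le_add_sqrt) auto
      finally have sb: "sqrt (b T) \<le> sqrt r + e / (2 * (K + 1))" using d by simp
      have "K * (e / (2 * (K + 1))) \<le> e / 2" using K0 e by (simp add: field_simps)
      moreover have "K * sqrt (b T) \<le> K * sqrt r + K * (e / (2 * (K + 1)))"
        using mult_left_mono[OF sb K0] by (simp add: distrib_left)
      ultimately have "K * sqrt (b T) \<le> K * sqrt r + e / 2" by linarith
      hence "\<nu> * a T \<le> K * sqrt r + e" using key[OF T] c by linarith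
      hence "a T \<le> (K * sqrt r + e) / \<nu>" using pos(1) by (simp add: pos_le_divide_eq mult.commute)
      thus ?case by simp
    qed
    have "Limsup at_top (\<lambda>T. ereal (a T)) \<le> ereal ((K * sqrt r + e) / \<nu>)"
      by (rule Limsup_bounded[OF ev])
    hence "ereal \<nu> * Limsup at_top (\<lambda>T. ereal (a T)) \<le> ereal \<nu> * ereal ((K * sqrt r + e) / \<nu>)"
      using pos(1) by (intro ereal_mult_left_mono) auto
    also have "\<dots> = ereal (K * sqrt (real_of_ereal L)) + ereal e" using pos(1) r by simp
    finally show "ereal \<nu> * Limsup at_top (\<lambda>T. ereal (a T)) \<le> ereal (K * sqrt (real_of_ereal L)) + ereal e" .
  qed
  show ?thesis using goal' unfolding L_def a_def b_def H_def E_def K_def Lf_def s3_def .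
qed

end
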